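(* Let $A$ be a JBW algebra, let $C$ be a maximal element of $ASU(A)$, and let $p\in C$ be a projection. Then $\dim U_p(C)=1$ if and only if $\dim U_p(A)=1$.
   Context: A JB algebra is a real Banach algebra $(A,\circ)$ with a commutative product satisfying $a\circ(b\circ a^2)=(a\circ b)\circ a^2$, $\|a^2\|\le\|a^2+b^2\|$, $\|a\|^2=\|a^2\|$; a JBW algebra is a JB algebra that is a dual Banach space (it has a unit $\mathbf{1}$). A projection is an element $p$ with $p\circ p=p$. For $a\in A$, $U_a:A\to A$ is $U_a(b)=2a\circ(a\circ b)-a^2\circ b$. $ASU(A)$ is the set of all norm-closed associative subalgebras of $A$ containing $\mathbf{1}$, ordered by inclusion; a maximal element is one not properly contained in another element of $ASU(A)$. *)

theory Defs
  imports "HOL-Analysis.Analysis"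
begin

(* A real Banach space 'a is a dual Banach space iff it is isometrically isomorphic
  to the dual of some Banach space X. We realize the predual X (canonically) as a
  norm-closed linear subspace of the dual 'a =>L real such that the evaluation map
  a |-> (f |-> f a) is an isometry from 'a onto the dual of X. *)
definition is_dual_banach :: "'a::banach itself \<Rightarrow> bool" where
  "is_dual_banach _ \<longleftrightarrow>
     (\<exists>X :: ('a \<Rightarrow>\<^sub>L real) set.
        subspace X \<and> closed X \<and>
        (\<forall>a::'a. norm a = (SUP f\<in>{f\<in>X. norm f \<le> 1}. \<bar>blinfun_apply f a\<bar>)) \<and>
        (\<forall>\<phi> :: ('a \<Rightarrow>\<^sub>L real) \<Rightarrow> real.
            ((\<forall>f\<in>X. \<forall>g\<in>X. \<phi> (f + g) = \<phi> f + \<phi> g) \<and>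
             (\<forall>c. \<forall>f\<in>X. \<phi> (c *\<^sub>R f) = c * \<phi> f) \<and>
             (\<exists>K. \<forall>f\<in>X. \<bar>\<phi> f\<bar> \<le> K * norm f))
            \<longrightarrow> (\<exists>a::'a. \<forall>f\<in>X. \<phi> f = blinfun_apply f a)))"

definition jb_algebra :: "('a::banach \<Rightarrow> 'a \<Rightarrow> 'a) \<Rightarrow> bool" where
  "jb_algebra m \<longleftrightarrow>
     bilinear m \<and>
     (\<forall>a b. norm (m a b) \<le> norm a * norm b) \<and>
     (\<forall>a b. m a b = m b a) \<and>
     (\<forall>a b. m a (m b (m a a)) = m (m a b) (m a a)) \<and>
     (\<forall>a b. norm (m a a) \<le> norm (m a a + m b b)) \<and>
     (\<forall>a. (norm a)\<^sup>2 = norm (m a a))"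

definition jordan_unit :: "('a \<Rightarrow> 'a \<Rightarrow> 'a) \<Rightarrow> 'a" where
  "jordan_unit m = (THE e. \<forall>a. m e a = a)"

(* JBW algebra: a JB algebra that is a dual Banach space (such an algebra has a unit). *)
definition jbw_algebra :: "('a::banach \<Rightarrow> 'a \<Rightarrow> 'a) \<Rightarrow> bool" where
  "jbw_algebra m \<longleftrightarrow> jb_algebra m \<and> is_dual_banach TYPE('a) \<and> (\<exists>e. \<forall>a. m e a = a)"

definition ASU :: "('a::banach \<Rightarrow> 'a \<Rightarrow> 'a) \<Rightarrow> 'a set set" where
  "ASU m = {C. subspace C \<and> (\<forall>x\<in>C. \<forall>y\<in>C. m x y \<in> C) \<and>
                (\<forall>x\<in>C. \<forall>y\<in>C. \<forall>z\<in>C. m (m x y) z = m x (m y z)) \<and>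
                closed C \<and> jordan_unit m \<in> C}"

definition maximal_ASU :: "('a::banach \<Rightarrow> 'a \<Rightarrow> 'a) \<Rightarrow> 'a set \<Rightarrow> bool" where
  "maximal_ASU m C \<longleftrightarrow> C \<in> ASU m \<and> \<not> (\<exists>D\<in>ASU m. C \<subset> D)"

definition Uop :: "('a::real_vector \<Rightarrow> 'a \<Rightarrow> 'a) \<Rightarrow> 'a \<Rightarrow> 'a \<Rightarrow> 'a" where
  "Uop m a b = 2 *\<^sub>R m a (m a b) - m (m a a) b"

end

theory Submission
  imports Defs
begin


locale jord =
  fixes m :: "'a::banach \<Rightarrow> 'a \<Rightarrow> 'a"
  assumes bil: "bilinear m"
    and comm: "\<And>a b. m a b = m b a"
    and jor: "\<And>a b. m a (m b (m a a)) = m (m a b) (m a a)"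
begin

lemmas ex = bilinear_ladd[OF bil] bilinear_radd[OF bil] bilinear_lmul[OF bil] bilinear_rmul[OF bil]
  bilinear_lsub[OF bil] bilinear_rsub[OF bil] bilinear_lneg[OF bil] bilinear_rneg[OF bil]
  bilinear_lzero[OF bil] bilinear_rzero[OF bil]

lemma lin: "m (m c b) (m a a) + 2 *\<^sub>R m (m a b) (m a c) = m c (m b (m a a)) + 2 *\<^sub>R m a (m b (m a c))"
proof -
  define F where "F u = m (m u b) (m u u) - m u (m b (m u u))" for u
  have F0: "F u = 0" for u unfolding F_def using jor[of u b] comm by simp
  have "F (a + c) - F (a - c) - 2 *\<^sub>R F c =
     2 *\<^sub>R ((m (m c b) (m a a) + 2 *\<^sub>R m (m a b) (m a c)) - (m c (m b (m a a)) + 2 *\<^sub>R m a (m b (m a c))))"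
    unfolding F_def by (simp add: ex algebra_simps comm scaleR_2)
  then show ?thesis using F0 by simp
qed

lemma lin_p: assumes "m p p = p"
  shows "m (m c b) p + 2 *\<^sub>R m (m p b) (m p c) = m c (m b p) + 2 *\<^sub>R m p (m b (m p c))"
  using lin[of c b p] assms by simp

lemma L3: assumes "m p p = p"
  shows "m p (m p (m p c)) + m p (m p (m p c)) = m p (m p c) + m p (m p c) + m p (m p c) - m p c"
proof -
  have "m (m c p) p + 2 *\<^sub>R m p (m p c) = m c p + 2 *\<^sub>R m p (m p (m p c))"
    using lin_p[OF assms, of c p] assms by simp
  then show ?thesis by (simp add: comm algebra_simps scaleR_2)
qed

lemma U_A1: assumes "m p p = p" shows "m p (Uop m p a) = Uop m p a"
  using L3[OF assms, of a] assms unfolding Uop_def by (simp add: ex algebra_simps scaleR_2)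

lemma A1_mul: assumes "m p p = p" "m p y = y" "m p z = z" shows "m p (m y z) = m y z"
proof -
  have "m (m z y) p + 2 *\<^sub>R m (m p y) (m p z) = m z (m y p) + 2 *\<^sub>R m p (m y (m p z))"
    by (rule lin_p[OF assms(1)])
  then show ?thesis using assms by (simp add: comm algebra_simps scaleR_2)
qed

lemma A10: assumes "m p p = p" "m p y = y" "m p z = 0" shows "m y z = 0"
proof -
  have "m (m z y) p + 2 *\<^sub>R m (m p y) (m p z) = m z (m y p) + 2 *\<^sub>R m p (m y (m p z))"
    by (rule lin_p[OF assms(1)])
  then have 1: "m p (m y z) = m y z" using assms by (simp add: comm ex algebra_simps scaleR_2)
  have "m (m y z) p + 2 *\<^sub>R m (m p z) (m p y) = m y (m z p) + 2 *\<^sub>R m p (m z (m p y))"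
    by (rule lin_p[OF assms(1)])
  then have 2: "m p (m y z) = 0" using assms by (simp add: comm ex algebra_simps scaleR_2)
  show ?thesis using 1 2 by simp
qed

end

primrec pw :: "('a \<Rightarrow> 'a \<Rightarrow> 'a) \<Rightarrow> 'a \<Rightarrow> 'a \<Rightarrow> nat \<Rightarrow> 'a" where
  "pw m p x 0 = p"
| "pw m p x (Suc n) = m x (pw m p x n)"

context jord begin

lemma pw_A1: assumes "m p p = p" "m p x = x" shows "m p (pw m p x n) = pw m p x n"
  by (induction n) (auto simp: assms A1_mul)

lemma pw_1: assumes "m p x = x" shows "pw m p x (Suc 0) = x"
  using assms comm by simp

lemma pw_assoc_n: assumes "m p p = p" "m p x = x"
  shows "i + j = n \<Longrightarrow> m (pw m p x i) (pw m p x j) = pw m p x n"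
proof (induction n arbitrary: i j rule: less_induct)
  case (less n)
  let ?P = "pw m p x"
  have A1: "m p (?P k) = ?P k" for k by (rule pw_A1[OF assms])
  have IH: "a + b < n \<Longrightarrow> m (?P a) (?P b) = ?P (a+b)" for a b using less.IH[of "a+b" a b] by simp
  have step: "m x (?P k) = ?P (Suc k)" for k by simp
  have x2: "m x x = ?P 2" using assms comm by (simp add: numeral_2_eq_2)
  show ?case
  proof (cases "i \<le> 1 \<or> j \<le> 1")
    case True
    have px: "m x p = x" using assms comm by metis
    have P1: "?P 1 = x" using px by (simp add: One_nat_def)
    from True consider "i = 0" | "i = 1" | "j = 0" | "j = 1" by linarith
    then show ?thesis
    proof cases
      case 1 then show ?thesis using less.prems A1 by simp
    next
      case 2 then have "n = Suc j" using less.prems by simp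
      then show ?thesis using 2 P1 by simp
    next
      case 3 then show ?thesis using less.prems A1 comm by simp
    next
      case 4 then have "n = Suc i" using less.prems by simp
      then show ?thesis using 4 P1 comm[of "?P i" x] by simp
    qed
  next
    case False
    then have n4: "n \<ge> 4" using less.prems by linarith
    define d where "d k = m (?P k) (?P (n - k)) - ?P n" for k
    define \<delta> where "\<delta> = m (?P (n-2)) (?P 2) - ?P n"
    have rec: "d k = \<delta> + 2 *\<^sub>R d (k - 1)" if k: "2 \<le> k" "k \<le> n - 1" for k
    proof -
      define jj where "jj = n - k"
      have jj: "jj \<ge> 1" "k + jj = n" using k n4 unfolding jj_def by auto
      have L: "m (m (?P jj) (?P (k-2))) (m x x) + 2 *\<^sub>R m (m x (?P (k-2))) (m x (?P jj))
        = m (?P jj) (m (?P (k-2)) (m x x)) + 2 *\<^sub>R m x (m (?P (k-2)) (m x (?P jj)))"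
        by (rule lin)
      have e1: "m (?P jj) (?P (k-2)) = ?P (n-2)"
      proof -
        have "jj+(k-2) < n" using jj k by simp
        then have "m (?P jj) (?P (k-2)) = ?P (jj+(k-2))" by (rule IH)
        moreover have "jj+(k-2) = n-2" using k jj by simp
        ultimately show ?thesis by metis
      qed
      have e2: "m (?P (k-2)) (?P 2) = ?P k"
      proof -
        have "k-2+2 < n" using jj k by simp
        then have "m (?P (k-2)) (?P 2) = ?P (k-2+2)" by (rule IH)
        moreover have "k-2+2 = k" using k by simp
        ultimately show ?thesis by metis
      qed
      have e3: "m (?P (k-2)) (?P (Suc jj)) = ?P (n-1)"
      proof -
        have "k-2+Suc jj < n" using jj k by simp
        then have "m (?P (k-2)) (?P (Suc jj)) = ?P (k-2+Suc jj)" by (rule IH)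
        moreover have "k-2+Suc jj = n-1" using k jj by simp
        ultimately show ?thesis by metis
      qed
      have "Suc (n-1) = n" using n4 by simp
      then have e4: "?P (Suc (n-1)) = ?P n" by (rule arg_cong)
      have "Suc (k-2) = k-1" using k by simp
      then have e5: "?P (Suc (k-2)) = ?P (k-1)" by (rule arg_cong)
      have "m (?P (n-2)) (?P 2) + 2 *\<^sub>R m (?P (k-1)) (?P (Suc jj)) = m (?P jj) (?P k) + 2 *\<^sub>R ?P n"
        using L by (simp only: x2 step e1 e2 e3 e4 e5)
      moreover have "Suc jj = n - (k - 1)" using jj k by simp
      moreover have "m (?P jj) (?P k) = m (?P k) (?P (n-k))" using comm jj_def by simp
      ultimately show ?thesis unfolding d_def \<delta>_def by (simp add: algebra_simps scaleR_2)
    qed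
    have d1: "d 1 = 0" unfolding d_def using step[of "n-1"] n4 pw_1[OF assms(2)]
      by (simp add: Suc_diff_le)
    have closed: "d k = (2 ^ (k - 1) - 1) *\<^sub>R \<delta>" if "1 \<le> k" "k \<le> n - 1" for k
      using that
    proof (induction k)
      case 0 then show ?case by simp
    next
      case (Suc k)
      show ?case
      proof (cases "k = 0")
        case True then show ?thesis using d1 by simp
      next
        case False
        then have "d (Suc k) = \<delta> + 2 *\<^sub>R d k" using rec[of "Suc k"] Suc.prems by simp
        also have "\<dots> = \<delta> + 2 *\<^sub>R ((2 ^ (k - 1) - 1) *\<^sub>R \<delta>)" using Suc False by simp
        also have "\<dots> = (2 ^ (Suc k - 1) - 1) *\<^sub>R \<delta>" using False
          by (cases k) (simp_all add: algebra_simps scaleR_2)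
        finally show ?thesis .
      qed
    qed
    have dn: "d (n-1) = 0" unfolding d_def using comm[of "?P (n-1)" "?P 1"] step[of "n-1"] n4
      pw_1[OF assms(2)] by (simp add: Suc_diff_le)
    have "(2 ^ (n - 1 - 1) - 1 :: real) \<noteq> 0"
    proof -
      have "(2::real) ^ (n - 1 - 1) \<ge> 2 ^ 2" by (rule power_increasing) (use n4 in auto)
      then show ?thesis by simp
    qed
    then have "\<delta> = 0" using closed[of "n-1"] dn n4 by simp
    moreover have "1 \<le> i" "i \<le> n - 1" using False less.prems by auto
    ultimately have "d i = 0" using closed[of i] by simp
    moreover have "n - i = j" using less.prems by simp
    ultimately show ?thesis unfolding d_def by simp
  qed
qed

end


lemma dim1: fixes p :: "'a::real_vector" assumes "p \<noteq> 0" shows "dim (span {p}) = 1"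
proof -
  have "independent {p}" using assms by simp
  then show ?thesis using real_vector.dim_span_eq_card_independent by fastforce
qed

lemma dim0: "dim {0::'a::real_vector} = 0"
proof -
  have "span {} = span {0::'a}" by simp
  moreover have "independent ({}::'a set)" by (simp add: real_vector.independent_empty)
  ultimately show ?thesis using real_vector.dim_eq_card[of "{}" "{0::'a}"] by simp
qed

lemma dim1_eq: fixes p :: "'a::real_vector"
  assumes "subspace V" "dim V = 1" "p \<in> V" "p \<noteq> 0" shows "V = span {p}"
proof -
  have "\<exists>b. independent b \<and> span b = span V"
  proof (rule ccontr)
    assume "\<not> ?thesis" then have "dim V = 0" unfolding real_vector.dim_def by auto
    then show False using assms by simp
  qed
  then obtain B where B: "independent B" "span B = span V" by blast
  then have "card B = 1" using real_vector.dim_eq_card assms(2) by metis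
  then obtain v where v: "B = {v}" using card_1_singletonE by blast
  have V: "V = range (\<lambda>k. k *\<^sub>R v)" using B v assms(1) real_vector.span_singleton
    by (metis real_vector.span_eq_iff)
  then obtain c where c: "p = c *\<^sub>R v" using assms(3) by blast
  then have "c \<noteq> 0" using assms(4) by auto
  have "range (\<lambda>k. k *\<^sub>R v) = range (\<lambda>k. k *\<^sub>R p)"
  proof (intro set_eqI iffI)
    fix y assume "y \<in> range (\<lambda>k. k *\<^sub>R v)"
    then obtain k where "y = k *\<^sub>R v" by blast
    then have "y = (k / c) *\<^sub>R p" using c \<open>c \<noteq> 0\<close> by simp
    then show "y \<in> range (\<lambda>k. k *\<^sub>R p)" by blast
  next
    fix y assume "y \<in> range (\<lambda>k. k *\<^sub>R p)"
    then obtain k where "y = k *\<^sub>R p" by blast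
    then have "y = (k * c) *\<^sub>R v" using c by simp
    then show "y \<in> range (\<lambda>k. k *\<^sub>R v)" by blast
  qed
  then show ?thesis using V real_vector.span_singleton by metis
qed

lemma cl2:
  fixes f :: "'a::topological_space \<Rightarrow> 'a \<Rightarrow> 'b::topological_space"
  assumes "\<And>u. continuous_on UNIV (f u)" "\<And>v. continuous_on UNIV (\<lambda>u. f u v)" "closed T"
    "\<And>u v. u \<in> S \<Longrightarrow> v \<in> S \<Longrightarrow> f u v \<in> T" "u \<in> closure S" "v \<in> closure S"
  shows "f u v \<in> T"
proof -
  have 1: "f u' v \<in> T" if "u' \<in> S" for u'
  proof -
    have "f u' ` closure S \<subseteq> T"
      by (rule image_closure_subset) (use assms that in \<open>auto intro: continuous_on_subset\<close>)
    then show ?thesis using assms by auto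
  qed
  have "(\<lambda>u. f u v) ` closure S \<subseteq> T"
    by (rule image_closure_subset) (use assms 1 in \<open>auto intro: continuous_on_subset\<close>)
  then show ?thesis using assms by auto
qed

lemma cl3:
  fixes g :: "'a::topological_space \<Rightarrow> 'a \<Rightarrow> 'a \<Rightarrow> 'b::topological_space"
  assumes "\<And>u v. continuous_on UNIV (g u v)" "\<And>u w. continuous_on UNIV (\<lambda>v. g u v w)"
    "\<And>v w. continuous_on UNIV (\<lambda>u. g u v w)" "closed T"
    "\<And>u v w. u \<in> S \<Longrightarrow> v \<in> S \<Longrightarrow> w \<in> S \<Longrightarrow> g u v w \<in> T"
    "u \<in> closure S" "v \<in> closure S" "w \<in> closure S"
  shows "g u v w \<in> T"
proof -
  have 1: "g u v w' \<in> T" if "w' \<in> S" for w'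
    by (rule cl2[where f="\<lambda>u v. g u v w'"]) (use assms that in auto)
  have "g u v ` closure S \<subseteq> T"
    by (rule image_closure_subset) (use assms 1 in \<open>auto intro: continuous_on_subset\<close>)
  then show ?thesis using assms by auto
qed



locale jordn = jord + assumes nrm: "\<And>a b. norm (m a b) \<le> norm a * norm b"
begin

lemma bb: "bounded_bilinear m"
  unfolding bounded_bilinear_def
proof (intro conjI allI)
  show "\<exists>K. \<forall>a b. norm (m a b) \<le> norm a * norm b * K" using nrm by (intro exI[of _ 1]) simp
qed (simp_all add: ex)

lemmas bbc = bounded_bilinear.continuous_on[OF bb]

lemma span_mul: assumes "\<forall>u\<in>S. \<forall>v\<in>S. m u v \<in> span S" "u \<in> span S" "v \<in> span S"
  shows "m u v \<in> span S"
proof -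
  have 1: "m u' v \<in> span S" if "u' \<in> S" for u'
    using assms(3)
    by (induct v rule: real_vector.span_induct_alt)
      (use assms(1) that in \<open>simp_all add: ex real_vector.span_add real_vector.span_scale real_vector.span_zero\<close>)
  show ?thesis using assms(2)
    by (induct u rule: real_vector.span_induct_alt)
      (use 1 in \<open>simp_all add: ex real_vector.span_add real_vector.span_scale real_vector.span_zero\<close>)
qed

lemma span_assoc: assumes "\<forall>u\<in>S. \<forall>v\<in>S. \<forall>w\<in>S. m (m u v) w = m u (m v w)"
  "u \<in> span S" "v \<in> span S" "w \<in> span S"
  shows "m (m u v) w = m u (m v w)"
proof -
  have 1: "m (m u' v') w = m u' (m v' w)" if "u' \<in> S" "v' \<in> S" for u' v'
    using assms(4)
    by (induct w rule: real_vector.span_induct_alt) (use assms(1) that in \<open>simp_all add: ex\<close>)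
  have 2: "m (m u' v) w = m u' (m v w)" if "u' \<in> S" for u'
    using assms(3)
    by (induct v rule: real_vector.span_induct_alt) (use 1 that in \<open>simp_all add: ex\<close>)
  show ?thesis using assms(2)
    by (induct u rule: real_vector.span_induct_alt) (use 2 in \<open>simp_all add: ex\<close>)
qed

lemma main:
  assumes C: "C \<in> ASU m" and mx: "\<not> (\<exists>D\<in>ASU m. C \<subset> D)" and pC: "p \<in> C" and idem: "m p p = p"
    and UC: "Uop m p ` C = span {p}" and p0: "p \<noteq> 0"
  shows "Uop m p a \<in> span {p}"
proof (rule ccontr)
  assume xn: "Uop m p a \<notin> span {p}"
  define x where "x = Uop m p a"
  have xA1: "m p x = x" unfolding x_def by (rule U_A1[OF idem])
  have sub: "subspace C" and mulC: "\<And>u v. u\<in>C \<Longrightarrow> v\<in>C \<Longrightarrow> m u v \<in> C"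
    and asC: "\<And>u v w. u\<in>C \<Longrightarrow> v\<in>C \<Longrightarrow> w\<in>C \<Longrightarrow> m (m u v) w = m u (m v w)"
    and clC: "closed C" and eC: "jordan_unit m \<in> C"
    using C unfolding ASU_def by auto
  have Uid: "Uop m p y = y" if "m p y = y" for y
    unfolding Uop_def using that idem by (simp add: scaleR_2)
  have xC: "x \<notin> C"
  proof
    assume "x \<in> C"
    then have "Uop m p x \<in> span {p}" using UC by blast
    then show False using Uid[OF xA1] xn x_def by simp
  qed
  have ppc: "m p (m p c) = m p c" if "c \<in> C" for c
    using asC[OF pC pC that] idem by simp
  have pc: "m p c \<in> span {p}" if "c \<in> C" for c
  proof -
    have "Uop m p c = m p c" unfolding Uop_def using ppc[OF that] idem by (simp add: scaleR_2)
    then show ?thesis using UC that by (metis image_eqI)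
  qed
  define l where "l c = (SOME k. m p c = k *\<^sub>R p)" for c
  have l: "m p c = l c *\<^sub>R p" if "c \<in> C" for c
  proof -
    have "\<exists>k. m p c = k *\<^sub>R p" using pc[OF that] real_vector.span_singleton by blast
    then show ?thesis unfolding l_def by (rule someI_ex)
  qed
  have act: "m c y = l c *\<^sub>R y" if "c \<in> C" "m p y = y" for c y
  proof -
    have "m p (c - m p c) = 0" using ppc[OF that(1)] by (simp add: ex)
    then have z: "m y (c - m p c) = 0" by (rule A10[OF idem that(2)])
    have "m c y = m (m p c) y + m (c - m p c) y" by (simp add: ex)
    also have "\<dots> = l c *\<^sub>R y" using z comm[of y "c - m p c"] l[OF that(1)] that(2) by (simp add: ex)
    finally show ?thesis .
  qed
  have act': "m y c = l c *\<^sub>R y" if "c \<in> C" "m p y = y" for c y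
    using act[OF that] comm by metis
  have lmul: "l (m c c') = l c * l c'" if "c \<in> C" "c' \<in> C" for c c'
  proof -
    have "l (m c c') *\<^sub>R p = m p (m c c')" using l mulC that by simp
    also have "\<dots> = m (m p c) c'" using asC[OF pC that] by simp
    also have "\<dots> = (l c * l c') *\<^sub>R p" using l that by (simp add: ex)
    finally show ?thesis using p0 by simp
  qed
  define Q where "Q = range (pw m p x)"
  have QA1: "m p q = q" if "q \<in> Q" for q using that pw_A1[OF idem xA1] unfolding Q_def by auto
  have Qmul: "m q q' \<in> Q" if "q \<in> Q" "q' \<in> Q" for q q'
    using that pw_assoc_n[OF idem xA1] unfolding Q_def by auto
  have Qas: "m (m q q') q'' = m q (m q' q'')" if qs: "q \<in> Q" "q' \<in> Q" "q'' \<in> Q" for q q' q''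
  proof -
    obtain i j k where "q = pw m p x i" "q' = pw m p x j" "q'' = pw m p x k" using qs unfolding Q_def by (meson rangeE)
    then show ?thesis using pw_assoc_n[OF idem xA1] by (simp add: add.assoc)
  qed
  define S where "S = C \<union> Q"
  have mulS: "\<forall>u\<in>S. \<forall>v\<in>S. m u v \<in> span S"
  proof (intro ballI)
    fix u v assume "u \<in> S" "v \<in> S"
    then consider "u \<in> C" "v \<in> C" | "u \<in> C" "v \<in> Q" | "u \<in> Q" "v \<in> C" | "u \<in> Q" "v \<in> Q"
      unfolding S_def by blast
    then show "m u v \<in> span S"
    proof cases
      case 1 then show ?thesis using mulC by (simp add: S_def real_vector.span_base)
    next
      case 2 then show ?thesis using act QA1
        by (simp add: S_def real_vector.span_base real_vector.span_scale)
    next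
      case 3 then show ?thesis using act' QA1
        by (simp add: S_def real_vector.span_base real_vector.span_scale)
    next
      case 4 then show ?thesis using Qmul by (simp add: S_def real_vector.span_base)
    qed
  qed
  have asS: "\<forall>u\<in>S. \<forall>v\<in>S. \<forall>w\<in>S. m (m u v) w = m u (m v w)"
  proof (intro ballI)
    fix u v w assume uvw: "u \<in> S" "v \<in> S" "w \<in> S"
    have CQ: "y \<in> C \<or> y \<in> Q" if "y \<in> S" for y using that S_def by blast
    show "m (m u v) w = m u (m v w)"
      using CQ[OF uvw(1)] CQ[OF uvw(2)] CQ[OF uvw(3)]
    proof (elim disjE)
      assume "u \<in> C" "v \<in> C" "w \<in> C" then show ?thesis by (rule asC)
    next
      assume "u \<in> C" "v \<in> C" "w \<in> Q" then show ?thesis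
        using act[of _ w] act[of _ "m v w"] QA1 lmul mulC by (simp add: ex)
    next
      assume "u \<in> C" "v \<in> Q" "w \<in> C" then show ?thesis
        using act[of u v] act'[of w v] act[of u "m v w"] act'[of w "m u v"] QA1 by (simp add: ex)
    next
      assume "u \<in> C" "v \<in> Q" "w \<in> Q" then show ?thesis
        using act[of u v] act[of u "m v w"] QA1 Qmul by (simp add: ex)
    next
      assume "u \<in> Q" "v \<in> C" "w \<in> C" then show ?thesis
        using act'[of v u] act'[of w "m u v"] act'[of "m v w" u] lmul mulC QA1 by (simp add: ex mult.commute)
    next
      assume "u \<in> Q" "v \<in> C" "w \<in> Q" then show ?thesis
        using act'[of v u] act[of v w] QA1 by (simp add: ex)
    next
      assume "u \<in> Q" "v \<in> Q" "w \<in> C" then show ?thesis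
        using act'[of w "m u v"] act'[of w v] QA1 Qmul by (simp add: ex)
    next
      assume "u \<in> Q" "v \<in> Q" "w \<in> Q" then show ?thesis by (rule Qas)
    qed
  qed
  define D where "D = closure (span S)"
  have cm1: "continuous_on UNIV (m u)" for u by (intro bbc continuous_intros)
  have cm2: "continuous_on UNIV (\<lambda>u. m u v)" for v by (intro bbc continuous_intros)
  have subD: "subspace D"
    unfolding subspace_def
  proof (intro conjI ballI allI)
    show "0 \<in> D" unfolding D_def using closure_subset real_vector.span_zero by blast
  next
    fix u v assume "u \<in> D" "v \<in> D"
    have sp: "\<And>a b. a \<in> span S \<Longrightarrow> b \<in> span S \<Longrightarrow> a + b \<in> closure (span S)"
      using closure_subset real_vector.span_add by blast
    show "u + v \<in> D" unfolding D_def
      by (rule cl2[where f="\<lambda>a b. a + b", OF _ _ closed_closure sp])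
        (use \<open>u \<in> D\<close> \<open>v \<in> D\<close> in \<open>simp_all add: D_def continuous_on_add continuous_on_id continuous_on_const\<close>)
  next
    fix c :: real and u assume "u \<in> D"
    have "(\<lambda>v. c *\<^sub>R v) ` closure (span S) \<subseteq> closure (span S)"
      by (rule image_closure_subset) (auto intro!: continuous_intros
          intro: closure_subset[THEN subsetD] real_vector.span_scale)
    then show "c *\<^sub>R u \<in> D" using \<open>u \<in> D\<close> unfolding D_def by blast
  qed
  have mulD: "\<forall>u\<in>D. \<forall>v\<in>D. m u v \<in> D"
    unfolding D_def
  proof (intro ballI)
    fix u v assume uv: "u \<in> closure (span S)" "v \<in> closure (span S)"
    have sp: "\<And>a b. a \<in> span S \<Longrightarrow> b \<in> span S \<Longrightarrow> m a b \<in> closure (span S)"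
      using closure_subset span_mul[OF mulS] by blast
    show "m u v \<in> closure (span S)"
      by (rule cl2[where f=m, OF cm1 cm2 closed_closure sp uv])
  qed
  have asD: "\<forall>u\<in>D. \<forall>v\<in>D. \<forall>w\<in>D. m (m u v) w = m u (m v w)"
  proof (intro ballI)
    fix u v w assume "u \<in> D" "v \<in> D" "w \<in> D"
    have "m (m u v) w - m u (m v w) \<in> {0}" unfolding D_def
      by (rule cl3[where g="\<lambda>u v w. m (m u v) w - m u (m v w)"])
        (use \<open>u \<in> D\<close> \<open>v \<in> D\<close> \<open>w \<in> D\<close> span_assoc[OF asS] in
          \<open>auto simp: D_def intro!: continuous_intros bbc\<close>)
    then show "m (m u v) w = m u (m v w)" by simp
  qed
  have SD: "S \<subseteq> D" unfolding D_def using closure_subset real_vector.span_base by blast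
  have "D \<in> ASU m" unfolding ASU_def using subD mulD asD eC SD by (auto simp: D_def S_def)
  moreover have "C \<subset> D"
  proof -
    have "x = pw m p x 1" using xA1 comm by (simp add: One_nat_def)
    then have "x \<in> D" using SD unfolding S_def Q_def by (metis UNIV_I UnCI rangeI subsetD)
    then show ?thesis using SD xC unfolding S_def by blast
  qed
  ultimately show False using mx by blast
qed

end


lemma jb_jordn: "jb_algebra m \<Longrightarrow> jordn m"
  unfolding jb_algebra_def jordn_def jord_def jordn_axioms_def by blast

theorem lemma2p4:
  fixes m :: "'a::banach \<Rightarrow> 'a \<Rightarrow> 'a" and C :: "'a set" and p :: 'a
  assumes "jbw_algebra m"
    and "maximal_ASU m C"
    and "p \<in> C" and "m p p = p"
  shows "dim (Uop m p ` C) = 1 \<longleftrightarrow> dim (range (Uop m p)) = 1"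
proof -
  have jb: "jb_algebra m" using assms(1) unfolding jbw_algebra_def by simp
  have J: "jordn m" by (rule jb_jordn[OF jb])
  have J0: "jord m" using J unfolding jordn_def by blast
  note ex = jord.ex[OF J0]
  have CA: "C \<in> ASU m" and mx: "\<not> (\<exists>D\<in>ASU m. C \<subset> D)" using assms(2) unfolding maximal_ASU_def by auto
  have subC: "subspace C" using CA unfolding ASU_def by auto
  have lin: "linear (Uop m p)"
    by (rule linearI) (simp_all add: Uop_def ex algebra_simps)
  have subUC: "subspace (Uop m p ` C)" by (rule real_vector.linear_subspace_image[OF lin subC])
  have subR: "subspace (range (Uop m p))" by (rule real_vector.linear_subspace_image[OF lin subspace_UNIV])
  have Up: "Uop m p p = p" unfolding Uop_def using assms(4) by (simp add: scaleR_2)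
  have pUC: "p \<in> Uop m p ` C" using Up assms(3) by (metis image_eqI)
  have pR: "p \<in> range (Uop m p)" using Up by (metis rangeI)
  show ?thesis
  proof (cases "p = 0")
    case True
    have U0: "Uop m p b = 0" for b unfolding Uop_def True by (simp add: ex)
    have "Uop m p ` C = {0}" using U0 pUC by auto
    moreover have "range (Uop m p) = {0}" using U0 by auto
    ultimately show ?thesis using dim0 by simp
  next
    case False
    have spC: "span {p} \<subseteq> Uop m p ` C" by (rule real_vector.span_minimal) (use subUC pUC in auto)
    have spR: "span {p} \<subseteq> range (Uop m p)" by (rule real_vector.span_minimal) (use subR pR in auto)
    show ?thesis
    proof
      assume "dim (Uop m p ` C) = 1"
      then have UC: "Uop m p ` C = span {p}" using dim1_eq subUC pUC False by blast
      have "range (Uop m p) \<subseteq> span {p}" using jordn.main[OF J CA mx assms(3) assms(4) UC False] by blast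
      then have "range (Uop m p) = span {p}" using spR by blast
      then show "dim (range (Uop m p)) = 1" using dim1 False by simp
    next
      assume "dim (range (Uop m p)) = 1"
      then have "range (Uop m p) = span {p}" using dim1_eq subR pR False by blast
      then have "Uop m p ` C = span {p}" using spC by blast
      then show "dim (Uop m p ` C) = 1" using dim1 False by simp
    qed
  qed
qed


end
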